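(* Let $1\le k\le d\le n-1$ and let $(M,\{W_j\},\{S_i^j\})$ be an exact-repair regenerating code of type $(n,k,d)$ with parameters $(B,\alpha,\beta)$. Let $L\subseteq R\subseteq\{1,\ldots,n\}$ and $M'\subseteq\{1,\ldots,n\}$ with $R\cap M'=\emptyset$, $|L|=\ell\ge1$, $|M'|=m$, $|R|=r$, and $r+m\le k$. Then \[ H(W_R\mid W_{M'})+(\ell-1)H(W_R)+H(S_{M'}^{L})\;\le\;\ell\,(r\alpha+\beta)+\ell\big((d-r)\beta-\alpha\big). \]
   Context: Fix integers $1\le k\le d\le n-1$. An exact-repair regenerating code of type $(n,k,d)$ with parameters $(B,\alpha,\beta)$ (nonnegative reals) is a collection of jointly distributed discrete random variables $M$, $W_j$ ($1\le j\le n$), $S_i^j$ ($1\le i,j\le n$, $i\neq j$) such that, with $H$ denoting Shannon entropy: $H(M)=B$; $H(W_j)=\alpha$ and $H(W_j\mid M)=0$ for all $j$; $H(M\mid W_J)=0$ for every $J\subseteq\{1,\dots,n\}$ with $|J|\ge k$; $H(S_i^j)=\beta$ and $H(S_i^j\mid W_i)=0$ for all $i\ne j$; and $H(W_j\mid S_I^j)=0$ for every $I\subseteq\{1,\dots,n\}\setminus\{j\}$ with $|I|\ge d$. Notation: for a set $J$, $W_J=(W_j)_{j\in J}$; for sets $I,J$, $S_I^J=(S_i^j)_{i\in I,\,j\in J,\,i\neq j}$ and $S_I^j=S_I^{\{j\}}$. (The set $M'$ of node indices is unrelated to the random variable $M$.) *)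

theory Defs
  imports "HOL-Probability.Probability"
begin

text \<open>Shannon entropy (base 2),
  valued in ennreal so that infinite entropy is represented faithfully.\<close>

definition ent :: "'o pmf \<Rightarrow> ('o \<Rightarrow> 'a) \<Rightarrow> ennreal" where
  "ent p X = (\<integral>\<^sup>+ \<omega>. ennreal (- log 2 (pmf (map_pmf X p) (X \<omega>))) \<partial>(measure_pmf p))"

definition cond_ent :: "'o pmf \<Rightarrow> ('o \<Rightarrow> 'a) \<Rightarrow> ('o \<Rightarrow> 'b) \<Rightarrow> ennreal" where
  "cond_ent p X Y = (\<integral>\<^sup>+ \<omega>. ennreal (- log 2
      (pmf (map_pmf (\<lambda>\<omega>. (X \<omega>, Y \<omega>)) p) (X \<omega>, Y \<omega>) / pmf (map_pmf Y p) (Y \<omega>)))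
     \<partial>(measure_pmf p))"

definition Wset :: "(nat \<Rightarrow> 'o \<Rightarrow> 'w) \<Rightarrow> nat set \<Rightarrow> 'o \<Rightarrow> (nat \<Rightarrow> 'w)" where
  "Wset W J = (\<lambda>\<omega> j. if j \<in> J then W j \<omega> else undefined)"

definition Sset :: "(nat \<Rightarrow> nat \<Rightarrow> 'o \<Rightarrow> 's) \<Rightarrow> nat set \<Rightarrow> nat set \<Rightarrow> 'o \<Rightarrow> (nat \<times> nat \<Rightarrow> 's)" where
  "Sset S I J = (\<lambda>\<omega> (i, j). if i \<in> I \<and> j \<in> J \<and> i \<noteq> j then S i j \<omega> else undefined)"

definition regen_code ::
  "nat \<Rightarrow> nat \<Rightarrow> nat \<Rightarrow> real \<Rightarrow> real \<Rightarrow> real \<Rightarrow> 'o pmf \<Rightarrow> ('o \<Rightarrow> 'm) \<Rightarrow>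
   (nat \<Rightarrow> 'o \<Rightarrow> 'w) \<Rightarrow> (nat \<Rightarrow> nat \<Rightarrow> 'o \<Rightarrow> 's) \<Rightarrow> bool" where
  "regen_code n k d B \<alpha> \<beta> p M W S \<longleftrightarrow>
     B \<ge> 0 \<and> \<alpha> \<ge> 0 \<and> \<beta> \<ge> 0 \<and>
     ent p M = ennreal B \<and>
     (\<forall>j\<in>{1..n}. ent p (W j) = ennreal \<alpha> \<and> cond_ent p (W j) M = 0) \<and>
     (\<forall>J. J \<subseteq> {1..n} \<and> card J \<ge> k \<longrightarrow> cond_ent p M (Wset W J) = 0) \<and>
     (\<forall>i\<in>{1..n}. \<forall>j\<in>{1..n}. i \<noteq> j \<longrightarrow>
        ent p (S i j) = ennreal \<beta> \<and> cond_ent p (S i j) (W i) = 0) \<and>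
     (\<forall>j\<in>{1..n}. \<forall>I. I \<subseteq> {1..n} - {j} \<and> card I \<ge> d \<longrightarrow>
        cond_ent p (W j) (Sset S I {j}) = 0)"

end

theory Submission
  imports Defs
begin


definition pa :: "'o pmf \<Rightarrow> ('o \<Rightarrow> 'a) \<Rightarrow> 'o \<Rightarrow> real" where
  "pa p X \<omega> = measure_pmf.prob p {\<omega>'. X \<omega>' = X \<omega>}"

definition eqv :: "'o pmf \<Rightarrow> ('o \<Rightarrow> 'a) \<Rightarrow> ('o \<Rightarrow> 'b) \<Rightarrow> bool" where
  "eqv p X Y \<longleftrightarrow> (\<forall>\<omega>\<in>set_pmf p. \<forall>\<omega>'\<in>set_pmf p. X \<omega> = X \<omega>' \<longleftrightarrow> Y \<omega> = Y \<omega>')"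

definition det :: "'o pmf \<Rightarrow> ('o \<Rightarrow> 'a) \<Rightarrow> ('o \<Rightarrow> 'b) \<Rightarrow> bool" where
  "det p X Y \<longleftrightarrow> (\<forall>\<omega>\<in>set_pmf p. \<forall>\<omega>'\<in>set_pmf p. Y \<omega> = Y \<omega>' \<longrightarrow> X \<omega> = X \<omega>')"

lemma ent_pa: "ent p X = (\<integral>\<^sup>+\<omega>. ennreal (- log 2 (pa p X \<omega>)) \<partial>p)"
  unfolding ent_def pa_def pmf_map by (simp add: vimage_def)

lemma cond_ent_pa: "cond_ent p X Y =
  (\<integral>\<^sup>+\<omega>. ennreal (- log 2 (pa p (\<lambda>\<omega>. (X \<omega>, Y \<omega>)) \<omega> / pa p Y \<omega>)) \<partial>p)"
  unfolding cond_ent_def pa_def pmf_map by (simp add: vimage_def)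

lemma pa_pos: "\<omega> \<in> set_pmf p \<Longrightarrow> 0 < pa p X \<omega>"
proof -
  assume a: "\<omega> \<in> set_pmf p"
  have "0 < pmf p \<omega>" using a by (simp add: pmf_positive)
  also have "pmf p \<omega> = measure_pmf.prob p {\<omega>}" by (simp add: measure_pmf_single)
  also have "\<dots> \<le> pa p X \<omega>" unfolding pa_def
    by (rule measure_pmf.finite_measure_mono) auto
  finally show ?thesis .
qed

lemma pa_le1: "pa p X \<omega> \<le> 1"
  unfolding pa_def by simp

lemma pa_mono: "(\<And>\<omega>'. \<omega>' \<in> set_pmf p \<Longrightarrow> Y \<omega>' = Y \<omega> \<Longrightarrow> X \<omega>' = X \<omega>) \<Longrightarrow> pa p Y \<omega> \<le> pa p X \<omega>"
proof -
  assume h: "\<And>\<omega>'. \<omega>' \<in> set_pmf p \<Longrightarrow> Y \<omega>' = Y \<omega> \<Longrightarrow> X \<omega>' = X \<omega>"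
  have "pa p Y \<omega> = measure_pmf.prob p ({\<omega>'. Y \<omega>' = Y \<omega>} \<inter> set_pmf p)"
    unfolding pa_def by (rule measure_pmf.finite_measure_eq_AE) (auto intro!: AE_pmfI)
  also have "\<dots> \<le> pa p X \<omega>" unfolding pa_def
    by (rule measure_pmf.finite_measure_mono) (use h in auto)
  finally show ?thesis .
qed

lemma pa_eqv: "eqv p X Y \<Longrightarrow> \<omega> \<in> set_pmf p \<Longrightarrow> pa p X \<omega> = pa p Y \<omega>"
  unfolding eqv_def by (intro antisym pa_mono) blast+

lemma pa_det: "det p X Y \<Longrightarrow> \<omega> \<in> set_pmf p \<Longrightarrow> pa p Y \<omega> \<le> pa p X \<omega>"
  unfolding det_def by (intro pa_mono) blast

lemma pa_pair_le: "pa p (\<lambda>\<omega>. (X \<omega>, Y \<omega>)) \<omega> \<le> pa p Y \<omega>"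
  unfolding pa_def by (rule measure_pmf.finite_measure_mono) auto

lemma ent_eqv: "eqv p X Y \<Longrightarrow> ent p X = ent p Y"
  unfolding ent_pa by (intro nn_integral_cong_AE AE_pmfI) (simp add: pa_eqv)

lemma eqv_pair: "eqv p X X' \<Longrightarrow> eqv p Y Y' \<Longrightarrow> eqv p (\<lambda>\<omega>. (X \<omega>, Y \<omega>)) (\<lambda>\<omega>. (X' \<omega>, Y' \<omega>))"
  unfolding eqv_def by auto

lemma cond_ent_eqv: "eqv p X X' \<Longrightarrow> eqv p Y Y' \<Longrightarrow> cond_ent p X Y = cond_ent p X' Y'"
  unfolding cond_ent_pa
  by (intro nn_integral_cong_AE AE_pmfI) (simp add: pa_eqv[of p Y Y'] pa_eqv[OF eqv_pair])

lemma ent_det: "det p X Y \<Longrightarrow> ent p X \<le> ent p Y"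
  unfolding ent_pa
proof (intro nn_integral_mono_AE AE_pmfI ennreal_leI)
  fix \<omega> assume "det p X Y" "\<omega> \<in> set_pmf p"
  then have "pa p Y \<omega> \<le> pa p X \<omega>" "0 < pa p Y \<omega>" by (auto simp: pa_det pa_pos)
  then show "- log 2 (pa p X \<omega>) \<le> - log 2 (pa p Y \<omega>)" by simp
qed

lemma chain: "ent p (\<lambda>\<omega>. (X \<omega>, Y \<omega>)) = ent p Y + cond_ent p X Y"
  unfolding ent_pa cond_ent_pa
proof (subst nn_integral_add[symmetric], simp, simp, intro nn_integral_cong_AE AE_pmfI)
  fix \<omega> assume w: "\<omega> \<in> set_pmf p"
  define a where "a = pa p (\<lambda>\<omega>. (X \<omega>, Y \<omega>)) \<omega>"
  define b where "b = pa p Y \<omega>"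
  have ab: "0 < a" "a \<le> b" "b \<le> 1" unfolding a_def b_def
    by (rule pa_pos[OF w], rule pa_pair_le, rule pa_le1)
  have "- log 2 a = - log 2 b + - log 2 (a / b)" using ab by (simp add: log_divide)
  moreover have "0 \<le> - log 2 b" "0 \<le> - log 2 (a/b)" using ab by auto
  ultimately show "ennreal (- log 2 a) = ennreal (- log 2 b) + ennreal (- log 2 (a / b))"
    using ennreal_plus[of "- log 2 b" "- log 2 (a / b)"] by metis
qed

lemma det_cond0: "cond_ent p X Y = 0 \<Longrightarrow> det p X Y"
proof -
  assume "cond_ent p X Y = 0"
  then have "AE \<omega> in p. ennreal (- log 2 (pa p (\<lambda>\<omega>. (X \<omega>, Y \<omega>)) \<omega> / pa p Y \<omega>)) = 0"
    unfolding cond_ent_pa by (subst (asm) nn_integral_0_iff_AE) auto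
  then have h: "\<And>\<omega>. \<omega> \<in> set_pmf p \<Longrightarrow> - log 2 (pa p (\<lambda>\<omega>. (X \<omega>, Y \<omega>)) \<omega> / pa p Y \<omega>) \<le> 0"
  proof -
    fix \<omega> assume w: "\<omega> \<in> set_pmf p"
    from \<open>AE \<omega> in p. _\<close> have "ennreal (- log 2 (pa p (\<lambda>\<omega>. (X \<omega>, Y \<omega>)) \<omega> / pa p Y \<omega>)) = 0"
      using w by (simp add: AE_measure_pmf_iff)
    then show "- log 2 (pa p (\<lambda>\<omega>. (X \<omega>, Y \<omega>)) \<omega> / pa p Y \<omega>) \<le> 0"
      using ennreal_eq_0_iff by blast
  qed
  show ?thesis unfolding det_def
  proof (intro ballI impI, rule ccontr)
    fix \<omega> \<omega>' assume w: "\<omega> \<in> set_pmf p" "\<omega>' \<in> set_pmf p" "Y \<omega> = Y \<omega>'" "X \<omega> \<noteq> X \<omega>'"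
    define a where "a = pa p (\<lambda>\<omega>. (X \<omega>, Y \<omega>)) \<omega>"
    define b where "b = pa p Y \<omega>"
    have ab: "0 < a" "0 < b" unfolding a_def b_def by (rule pa_pos[OF w(1)])+
    have "1 \<le> a / b" using h[OF w(1)] ab unfolding a_def[symmetric] b_def[symmetric]
      by (simp add: zero_le_log_cancel_iff)
    then have "b \<le> a" using ab by simp
    moreover have "a + pmf p \<omega>' \<le> b"
    proof -
      have "a + pmf p \<omega>' = measure_pmf.prob p ({\<omega>''. X \<omega>'' = X \<omega> \<and> Y \<omega>'' = Y \<omega>} \<union> {\<omega>'})"
        unfolding a_def pa_def using w
        by (subst measure_pmf.finite_measure_Union) (auto simp: measure_pmf_single)
      also have "\<dots> \<le> b" unfolding b_def pa_def
        by (rule measure_pmf.finite_measure_mono) (use w in auto)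
      finally show ?thesis .
    qed
    moreover have "0 < pmf p \<omega>'" using w by (simp add: pmf_positive)
    ultimately show False by simp
  qed
qed

lemma gibbs: "(\<integral>\<^sup>+\<omega>. ennreal (pmf R (T \<omega>)) / ennreal (pmf (map_pmf T p) (T \<omega>)) \<partial>measure_pmf p) \<le> 1"
proof -
  define Q where "Q = map_pmf T p"
  have "(\<integral>\<^sup>+\<omega>. ennreal (pmf R (T \<omega>)) / ennreal (pmf (map_pmf T p) (T \<omega>)) \<partial>p)
      = (\<integral>\<^sup>+t. ennreal (pmf R t) / ennreal (pmf Q t) \<partial>Q)" unfolding Q_def by simp
  also have "\<dots> = (\<integral>\<^sup>+t. ennreal (pmf Q t) * (ennreal (pmf R t) / ennreal (pmf Q t)) \<partial>count_space UNIV)"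
    by (rule nn_integral_measure_pmf)
  also have "\<dots> \<le> (\<integral>\<^sup>+t. ennreal (pmf R t) \<partial>count_space UNIV)"
  proof (rule nn_integral_mono)
    fix t
    show "ennreal (pmf Q t) * (ennreal (pmf R t) / ennreal (pmf Q t)) \<le> ennreal (pmf R t)"
    proof (cases "pmf Q t = 0")
      case True then show ?thesis by simp
    next
      case False
      then have "ennreal (pmf Q t) \<noteq> 0" by simp
      then show ?thesis
        unfolding ennreal_times_divide mult.commute[of "ennreal (pmf Q t)"]
        by (subst ennreal_mult_divide_eq) auto
    qed
  qed
  also have "\<dots> = 1" by (simp add: nn_integral_pmf)
  finally show ?thesis .
qed

lemma emeasure_cond_pmf:
  assumes "set_pmf p \<inter> s \<noteq> {}"
  shows "emeasure (cond_pmf p s) A = emeasure p (s \<inter> A) / emeasure p s"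
  by (simp add: cond_pmf.rep_eq[OF assms])

lemma pmfR:
  assumes w: "\<omega> \<in> set_pmf p"
  shows "ennreal (pmf (bind_pmf (map_pmf (\<lambda>\<omega>. (X \<omega>, Y \<omega>)) p)
      (\<lambda>(x, y). map_pmf (\<lambda>\<omega>. (x, y, Z \<omega>)) (cond_pmf p {\<omega>. Y \<omega> = y}))) (X \<omega>, Y \<omega>, Z \<omega>))
    = ennreal (pa p (\<lambda>\<omega>. (X \<omega>, Y \<omega>)) \<omega> * pa p (\<lambda>\<omega>. (Y \<omega>, Z \<omega>)) \<omega> / pa p Y \<omega>)"
proof -
  define s where "s = {\<omega>'. Y \<omega>' = Y \<omega>}"
  have ne: "set_pmf p \<inter> s \<noteq> {}" using w unfolding s_def by auto
  define c where "c = emeasure (cond_pmf p s) {\<omega>'. Z \<omega>' = Z \<omega>}"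
  have "ennreal (pmf (bind_pmf (map_pmf (\<lambda>\<omega>. (X \<omega>, Y \<omega>)) p)
      (\<lambda>(x, y). map_pmf (\<lambda>\<omega>. (x, y, Z \<omega>)) (cond_pmf p {\<omega>. Y \<omega> = y}))) (X \<omega>, Y \<omega>, Z \<omega>))
    = (\<integral>\<^sup>+\<omega>'. ennreal (pmf (map_pmf (\<lambda>\<omega>''. (X \<omega>', Y \<omega>', Z \<omega>'')) (cond_pmf p {\<omega>''. Y \<omega>'' = Y \<omega>'})) (X \<omega>, Y \<omega>, Z \<omega>)) \<partial>p)"
    by (simp add: ennreal_pmf_bind)
  also have "\<dots> = (\<integral>\<^sup>+\<omega>'. c * indicator {\<omega>'. X \<omega>' = X \<omega> \<and> Y \<omega>' = Y \<omega>} \<omega>' \<partial>p)"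
  proof (rule nn_integral_cong)
    fix \<omega>'
    show "ennreal (pmf (map_pmf (\<lambda>\<omega>''. (X \<omega>', Y \<omega>', Z \<omega>'')) (cond_pmf p {\<omega>''. Y \<omega>'' = Y \<omega>'})) (X \<omega>, Y \<omega>, Z \<omega>))
       = c * indicator {\<omega>'. X \<omega>' = X \<omega> \<and> Y \<omega>' = Y \<omega>} \<omega>'"
    proof (cases "X \<omega>' = X \<omega> \<and> Y \<omega>' = Y \<omega>")
      case True
      then show ?thesis unfolding c_def s_def ennreal_pmf_map
        by (simp add: vimage_def)
    next
      case False
      then show ?thesis unfolding ennreal_pmf_map by (auto simp: vimage_def)
    qed
  qed
  also have "\<dots> = c * emeasure p {\<omega>'. X \<omega>' = X \<omega> \<and> Y \<omega>' = Y \<omega>}"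
    by (simp add: nn_integral_cmult_indicator)
  also have "c = emeasure p (s \<inter> {\<omega>'. Z \<omega>' = Z \<omega>}) / emeasure p s"
    unfolding c_def by (rule emeasure_cond_pmf[OF ne])
  also have "s \<inter> {\<omega>'. Z \<omega>' = Z \<omega>} = {\<omega>'. Y \<omega>' = Y \<omega> \<and> Z \<omega>' = Z \<omega>}" unfolding s_def by auto
  finally have eq: "ennreal (pmf (bind_pmf (map_pmf (\<lambda>\<omega>. (X \<omega>, Y \<omega>)) p)
      (\<lambda>(x, y). map_pmf (\<lambda>\<omega>. (x, y, Z \<omega>)) (cond_pmf p {\<omega>. Y \<omega> = y}))) (X \<omega>, Y \<omega>, Z \<omega>))
     = emeasure p {\<omega>'. Y \<omega>' = Y \<omega> \<and> Z \<omega>' = Z \<omega>} / emeasure p s * emeasure p {\<omega>'. X \<omega>' = X \<omega> \<and> Y \<omega>' = Y \<omega>}" .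
  have ps: "0 < pa p Y \<omega>" using pa_pos[OF w] .
  define a1 where "a1 = measure_pmf.prob p {\<omega>'. Y \<omega>' = Y \<omega> \<and> Z \<omega>' = Z \<omega>}"
  define a2 where "a2 = measure_pmf.prob p {\<omega>'. X \<omega>' = X \<omega> \<and> Y \<omega>' = Y \<omega>}"
  define a3 where "a3 = measure_pmf.prob p s"
  have a3: "0 < a3" using ps unfolding a3_def pa_def s_def .
  have "emeasure p {\<omega>'. Y \<omega>' = Y \<omega> \<and> Z \<omega>' = Z \<omega>} / emeasure p s * emeasure p {\<omega>'. X \<omega>' = X \<omega> \<and> Y \<omega>' = Y \<omega>}
     = ennreal a1 / ennreal a3 * ennreal a2"
    unfolding a1_def a2_def a3_def measure_pmf.emeasure_eq_measure ..
  also have "\<dots> = ennreal (a1 / a3) * ennreal a2" using a3 by (subst divide_ennreal) (auto simp: a1_def)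
  also have "\<dots> = ennreal (a1 / a3 * a2)" by (rule ennreal_mult[symmetric]) (use a3 in \<open>auto simp: a1_def a2_def\<close>)
  also have "a1 / a3 * a2 = pa p (\<lambda>\<omega>. (X \<omega>, Y \<omega>)) \<omega> * pa p (\<lambda>\<omega>. (Y \<omega>, Z \<omega>)) \<omega> / pa p Y \<omega>"
    unfolding a1_def a2_def a3_def pa_def s_def by simp
  finally show ?thesis unfolding eq .
qed

lemma core: "cond_ent p X (\<lambda>\<omega>. (Y \<omega>, Z \<omega>)) \<le> cond_ent p X Y"
proof -
  define T where "T = (\<lambda>\<omega>. (X \<omega>, Y \<omega>, Z \<omega>))"
  define R where "R = bind_pmf (map_pmf (\<lambda>\<omega>. (X \<omega>, Y \<omega>)) p)
      (\<lambda>(x, y). map_pmf (\<lambda>\<omega>. (x, y, Z \<omega>)) (cond_pmf p {\<omega>. Y \<omega> = y}))"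
  define a where "a = (\<lambda>\<omega>. pa p (\<lambda>\<omega>. (X \<omega>, Y \<omega>, Z \<omega>)) \<omega> / pa p (\<lambda>\<omega>. (Y \<omega>, Z \<omega>)) \<omega>)"
  define b where "b = (\<lambda>\<omega>. pa p (\<lambda>\<omega>. (X \<omega>, Y \<omega>)) \<omega> / pa p Y \<omega>)"
  define c where "c = ln (2::real)"
  have c: "0 < c" unfolding c_def by simp
  define H1 where "H1 = cond_ent p X (\<lambda>\<omega>. (Y \<omega>, Z \<omega>))"
  define H2 where "H2 = cond_ent p X Y"
  have H1: "H1 = (\<integral>\<^sup>+\<omega>. ennreal (- log 2 (a \<omega>)) \<partial>p)" unfolding H1_def cond_ent_pa a_def ..
  have H2: "H2 = (\<integral>\<^sup>+\<omega>. ennreal (- log 2 (b \<omega>)) \<partial>p)" unfolding H2_def cond_ent_pa b_def ..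
  have pw: "ennreal c * ennreal (- log 2 (a \<omega>)) + 1 \<le>
      ennreal c * ennreal (- log 2 (b \<omega>)) + ennreal (pmf R (T \<omega>)) / ennreal (pmf (map_pmf T p) (T \<omega>))"
    if w: "\<omega> \<in> set_pmf p" for \<omega>
  proof -
    define pxyz where "pxyz = pa p (\<lambda>\<omega>. (X \<omega>, Y \<omega>, Z \<omega>)) \<omega>"
    define pyz where "pyz = pa p (\<lambda>\<omega>. (Y \<omega>, Z \<omega>)) \<omega>"
    define pxy where "pxy = pa p (\<lambda>\<omega>. (X \<omega>, Y \<omega>)) \<omega>"
    define py where "py = pa p Y \<omega>"
    have pos: "0 < pxyz" "0 < pyz" "0 < pxy" "0 < py" unfolding pxyz_def pyz_def pxy_def py_def
      by (rule pa_pos[OF w])+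
    have le: "pxyz \<le> pyz" "pxy \<le> py" unfolding pxyz_def pyz_def pxy_def py_def by (rule pa_pair_le)+
    have a: "a \<omega> = pxyz / pyz" and b: "b \<omega> = pxy / py"
      unfolding a_def b_def pxyz_def pyz_def pxy_def py_def by simp_all
    have Q: "pmf (map_pmf T p) (T \<omega>) = pxyz" unfolding pmf_map pxyz_def pa_def T_def by (simp add: vimage_def)
    have Rv: "ennreal (pmf R (T \<omega>)) = ennreal (pxy * pyz / py)"
      unfolding R_def T_def pxy_def pyz_def py_def by (rule pmfR[OF w])
    have ratio: "ennreal (pmf R (T \<omega>)) / ennreal (pmf (map_pmf T p) (T \<omega>)) = ennreal (b \<omega> / a \<omega>)"
    proof -
      have "ennreal (pmf R (T \<omega>)) / ennreal (pmf (map_pmf T p) (T \<omega>)) = ennreal (pxy * pyz / py / pxyz)"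
        unfolding Rv Q using pos by (subst divide_ennreal) auto
      also have "pxy * pyz / py / pxyz = b \<omega> / a \<omega>" unfolding a b using pos by (simp add: field_simps)
      finally show ?thesis .
    qed
    have A: "0 < a \<omega>" "a \<omega> \<le> 1" and B: "0 < b \<omega>" "b \<omega> \<le> 1" unfolding a b using pos le by auto
    have lg: "c * (- log 2 x) = - ln x" if "0 < x" for x using that c unfolding c_def log_def by simp
    have real: "c * (- log 2 (a \<omega>)) + 1 \<le> c * (- log 2 (b \<omega>)) + b \<omega> / a \<omega>"
    proof -
      have "ln (b \<omega> / a \<omega>) \<le> b \<omega> / a \<omega> - 1" using A B by (intro ln_le_minus_one) auto
      then have "- ln (a \<omega>) + 1 \<le> - ln (b \<omega>) + b \<omega> / a \<omega>" using A B by (simp add: ln_div)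
      then show ?thesis using lg A B by simp
    qed
    have nn: "0 \<le> - log 2 (a \<omega>)" "0 \<le> - log 2 (b \<omega>)" "0 \<le> b \<omega> / a \<omega>" using A B by auto
    have "ennreal c * ennreal (- log 2 (a \<omega>)) + 1 = ennreal (c * (- log 2 (a \<omega>)) + 1)"
      using nn c by (simp only: ennreal_plus[of "c * _" 1] ennreal_mult[of c] mult_nonneg_nonneg less_imp_le ennreal_1 zero_le_one)
    also have "\<dots> \<le> ennreal (c * (- log 2 (b \<omega>)) + b \<omega> / a \<omega>)" by (rule ennreal_leI[OF real])
    also have "\<dots> = ennreal c * ennreal (- log 2 (b \<omega>)) + ennreal (b \<omega> / a \<omega>)"
      using nn c by (simp only: ennreal_plus[of "c * _" "b \<omega> / a \<omega>"] ennreal_mult[of c] mult_nonneg_nonneg less_imp_le)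
    finally show ?thesis unfolding ratio .
  qed
  have "ennreal c * H1 + 1 = (\<integral>\<^sup>+\<omega>. ennreal c * ennreal (- log 2 (a \<omega>)) + 1 \<partial>p)"
    unfolding H1 by (simp add: nn_integral_add nn_integral_cmult)
  also have "\<dots> \<le> (\<integral>\<^sup>+\<omega>. ennreal c * ennreal (- log 2 (b \<omega>)) + ennreal (pmf R (T \<omega>)) / ennreal (pmf (map_pmf T p) (T \<omega>)) \<partial>p)"
    by (intro nn_integral_mono_AE AE_pmfI pw)
  also have "\<dots> = ennreal c * H2 + (\<integral>\<^sup>+\<omega>. ennreal (pmf R (T \<omega>)) / ennreal (pmf (map_pmf T p) (T \<omega>)) \<partial>p)"
    unfolding H2 by (simp add: nn_integral_add nn_integral_cmult)
  also have "\<dots> \<le> ennreal c * H2 + 1" by (intro add_left_mono gibbs)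
  finally have "1 + ennreal c * H1 \<le> 1 + ennreal c * H2" by (simp add: add.commute)
  then have cc: "ennreal c * H1 \<le> ennreal c * H2" by (simp add: ennreal_add_left_cancel_le)
  have inv: "ennreal (1 / c) * ennreal c = 1" using c by (simp add: ennreal_mult[symmetric])
  have "H1 = ennreal (1 / c) * (ennreal c * H1)" by (simp add: mult.assoc[symmetric] inv)
  also have "\<dots> \<le> ennreal (1 / c) * (ennreal c * H2)" by (intro mult_left_mono cc) simp
  also have "\<dots> = H2" by (simp add: mult.assoc[symmetric] inv)
  finally show ?thesis unfolding H1_def H2_def .
qed

lemma eqv_refl[simp]: "eqv p X X" unfolding eqv_def by auto

lemma ent_const: "ent p (\<lambda>_. c) = 0"
  unfolding ent_pa pa_def by simp

lemma cond_ent_unit: "cond_ent p X (\<lambda>_. ()) = ent p X"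
  unfolding cond_ent_pa ent_pa pa_def by simp

lemma cond_le_ent: "cond_ent p X Y \<le> ent p X"
proof -
  have "cond_ent p X Y = cond_ent p X (\<lambda>\<omega>. ((), Y \<omega>))"
    by (rule cond_ent_eqv) (auto simp: eqv_def)
  also have "\<dots> \<le> cond_ent p X (\<lambda>_. ())" by (rule core)
  finally show ?thesis by (simp add: cond_ent_unit)
qed

lemma subadd: "ent p (\<lambda>\<omega>. (X \<omega>, Y \<omega>)) \<le> ent p X + ent p Y"
  unfolding chain using cond_le_ent[of p X Y] by (simp add: add.commute add_left_mono)

lemma submod: "ent p (\<lambda>\<omega>. (A \<omega>, B \<omega>, C \<omega>)) + ent p A \<le> ent p (\<lambda>\<omega>. (A \<omega>, B \<omega>)) + ent p (\<lambda>\<omega>. (A \<omega>, C \<omega>))"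
proof -
  have e1: "ent p (\<lambda>\<omega>. (A \<omega>, B \<omega>, C \<omega>)) = ent p (\<lambda>\<omega>. (B \<omega>, A \<omega>, C \<omega>))"
    by (rule ent_eqv) (auto simp: eqv_def)
  have e2: "ent p (\<lambda>\<omega>. (A \<omega>, B \<omega>)) = ent p (\<lambda>\<omega>. (B \<omega>, A \<omega>))"
    by (rule ent_eqv) (auto simp: eqv_def)
  have "ent p (\<lambda>\<omega>. (A \<omega>, B \<omega>, C \<omega>)) + ent p A
      = ent p (\<lambda>\<omega>. (A \<omega>, C \<omega>)) + cond_ent p B (\<lambda>\<omega>. (A \<omega>, C \<omega>)) + ent p A"
    unfolding e1 chain[of p B "\<lambda>\<omega>. (A \<omega>, C \<omega>)"] ..
  also have "\<dots> \<le> ent p (\<lambda>\<omega>. (A \<omega>, C \<omega>)) + cond_ent p B A + ent p A"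
    by (intro add_mono core order_refl)
  also have "\<dots> = ent p (\<lambda>\<omega>. (A \<omega>, B \<omega>)) + ent p (\<lambda>\<omega>. (A \<omega>, C \<omega>))"
    unfolding e2 chain[of p B A] by (simp only: ac_simps)
  finally show ?thesis .
qed

lemma cond_mono_det: "det p Y' Y \<Longrightarrow> cond_ent p X Y \<le> cond_ent p X Y'"
proof -
  assume d: "det p Y' Y"
  have "cond_ent p X Y = cond_ent p X (\<lambda>\<omega>. (Y' \<omega>, Y \<omega>))"
    by (rule cond_ent_eqv) (use d in \<open>unfold eqv_def det_def, simp, blast\<close>)
  also have "\<dots> \<le> cond_ent p X Y'" by (rule core)
  finally show ?thesis .
qed

lemma tup_eq: "((\<lambda>x. if x \<in> A then f x else undefined) = (\<lambda>x. if x \<in> A then g x else undefined)) \<longleftrightarrow> (\<forall>x\<in>A. f x = g x)"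
  by (auto simp: fun_eq_iff)

lemma ent_tup_le:
  assumes "finite A" "0 \<le> e" "\<forall>a\<in>A. ent p (F a) \<le> ennreal e"
  shows "ent p (\<lambda>\<omega> a. if a \<in> A then F a \<omega> else undefined) \<le> ennreal (real (card A) * e)"
  using assms
proof (induction A rule: finite_induct)
  case empty
  then show ?case by (simp add: ent_const)
next
  case (insert a A)
  have "ent p (\<lambda>\<omega> x. if x \<in> insert a A then F x \<omega> else undefined)
     = ent p (\<lambda>\<omega>. (F a \<omega>, (\<lambda>x. if x \<in> A then F x \<omega> else undefined)))"
    by (rule ent_eqv) (unfold eqv_def prod.inject tup_eq, blast)
  also have "\<dots> \<le> ent p (F a) + ent p (\<lambda>\<omega> x. if x \<in> A then F x \<omega> else undefined)"
    by (rule subadd)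
  also have "\<dots> \<le> ennreal e + ennreal (real (card A) * e)"
    using insert by (intro add_mono) auto
  also have "\<dots> = ennreal (real (card (insert a A)) * e)"
  proof -
    have "real (card (insert a A)) * e = e + real (card A) * e" using insert by (simp add: algebra_simps)
    then show ?thesis using insert by (simp add: ennreal_plus)
  qed
  finally show ?case .
qed




lemma Sset_eq: "Sset S I J \<omega> = Sset S I J \<omega>' \<longleftrightarrow> (\<forall>i\<in>I. \<forall>j\<in>J. i \<noteq> j \<longrightarrow> S i j \<omega> = S i j \<omega>')"
proof
  assume h: "Sset S I J \<omega> = Sset S I J \<omega>'"
  show "\<forall>i\<in>I. \<forall>j\<in>J. i \<noteq> j \<longrightarrow> S i j \<omega> = S i j \<omega>'"
  proof (intro ballI impI)
    fix i j assume "i \<in> I" "j \<in> J" "i \<noteq> j"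
    then show "S i j \<omega> = S i j \<omega>'" using fun_cong[OF h, of "(i, j)"] by (simp add: Sset_def)
  qed
next
  assume h: "\<forall>i\<in>I. \<forall>j\<in>J. i \<noteq> j \<longrightarrow> S i j \<omega> = S i j \<omega>'"
  show "Sset S I J \<omega> = Sset S I J \<omega>'"
  proof (rule ext)
    fix x :: "nat \<times> nat" obtain i j where x: "x = (i, j)" by (cases x)
    show "Sset S I J \<omega> x = Sset S I J \<omega>' x" unfolding x Sset_def using h by simp
  qed
qed

lemma Wset_eq: "Wset W J \<omega> = Wset W J \<omega>' \<longleftrightarrow> (\<forall>j\<in>J. W j \<omega> = W j \<omega>')"
  unfolding Wset_def tup_eq ..

lemma step_c:
  fixes A :: "'o \<Rightarrow> 'a" and p :: "'o pmf"
  assumes "finite L" "L \<noteq> {}"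
  shows "ent p (\<lambda>\<omega>. (A \<omega>, Sset S M' L \<omega>)) + of_nat (card L - 1) * ent p A
     \<le> (\<Sum>j\<in>L. ent p (\<lambda>\<omega>. (A \<omega>, Sset S M' {j} \<omega>)))"
  using assms
proof (induction L rule: finite_ne_induct)
  case (singleton x)
  then show ?case by simp
next
  case (insert a F)
  have e: "ent p (\<lambda>\<omega>. (A \<omega>, Sset S M' (insert a F) \<omega>)) = ent p (\<lambda>\<omega>. (A \<omega>, Sset S M' F \<omega>, Sset S M' {a} \<omega>))"
    by (rule ent_eqv) (simp add: eqv_def Sset_eq; blast)
  have c: "card (insert a F) - 1 = Suc (card F - 1)" proof -
    have "card F > 0" using insert by (simp add: card_gt_0_iff)
    then show ?thesis using insert by simp
  qed
  have "ent p (\<lambda>\<omega>. (A \<omega>, Sset S M' (insert a F) \<omega>)) + of_nat (card (insert a F) - 1) * ent p A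
      = (ent p (\<lambda>\<omega>. (A \<omega>, Sset S M' F \<omega>, Sset S M' {a} \<omega>)) + ent p A) + of_nat (card F - 1) * ent p A"
    unfolding e c by (simp add: distrib_right distrib_left ac_simps)
  also have "\<dots> \<le> (ent p (\<lambda>\<omega>. (A \<omega>, Sset S M' F \<omega>)) + ent p (\<lambda>\<omega>. (A \<omega>, Sset S M' {a} \<omega>))) + of_nat (card F - 1) * ent p A"
    by (intro add_mono submod order_refl)
  also have "\<dots> = ent p (\<lambda>\<omega>. (A \<omega>, Sset S M' {a} \<omega>)) + (ent p (\<lambda>\<omega>. (A \<omega>, Sset S M' F \<omega>)) + of_nat (card F - 1) * ent p A)"
    by (simp add: ac_simps)
  also have "\<dots> \<le> ent p (\<lambda>\<omega>. (A \<omega>, Sset S M' {a} \<omega>)) + (\<Sum>j\<in>F. ent p (\<lambda>\<omega>. (A \<omega>, Sset S M' {j} \<omega>)))"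
    by (intro add_left_mono insert.IH)
  also have "\<dots> = (\<Sum>j\<in>insert a F. ent p (\<lambda>\<omega>. (A \<omega>, Sset S M' {j} \<omega>)))"
    using insert by simp
  finally show ?case .
qed

lemma ent_Sset_le:
  assumes "finite I" "j \<notin> I" "0 \<le> e" "\<forall>i\<in>I. ent p (S i j) \<le> ennreal e"
  shows "ent p (Sset S I {j}) \<le> ennreal (real (card I) * e)"
proof -
  have "ent p (Sset S I {j}) = ent p (\<lambda>\<omega> i. if i \<in> I then S i j \<omega> else undefined)"
    unfolding eqv_def Sset_eq tup_eq using assms(2) by (intro ent_eqv) (unfold eqv_def Sset_eq tup_eq, auto)
  also have "\<dots> \<le> ennreal (real (card I) * e)" by (rule ent_tup_le[OF assms(1,3,4)])
  finally show ?thesis .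
qed

lemma ent_Wset_le:
  assumes "finite I" "0 \<le> e" "\<forall>i\<in>I. ent p (W i) \<le> ennreal e"
  shows "ent p (Wset W I) \<le> ennreal (real (card I) * e)"
  unfolding Wset_def by (rule ent_tup_le[OF assms])

lemma step_d:
  fixes p :: "'o pmf" and W :: "nat \<Rightarrow> 'o \<Rightarrow> 'w" and S :: "nat \<Rightarrow> nat \<Rightarrow> 'o \<Rightarrow> 's"
  assumes "1 \<le> k" "k \<le> d" "d \<le> n - 1"
    and reg: "regen_code n k d B \<alpha> \<beta> p M W S"
    and "L \<subseteq> R" "R \<subseteq> {1..n}" "M' \<subseteq> {1..n}" "R \<inter> M' = {}"
    and "card R + card M' \<le> k" and j: "j \<in> L"
  shows "ent p (\<lambda>\<omega>. (Wset W R \<omega>, Sset S M' {j} \<omega>))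
     \<le> ennreal ((real (card R) - 1) * \<alpha> + (real d - real (card R) + 1) * \<beta>)"
proof -
  have ab: "0 \<le> \<alpha>" "0 \<le> \<beta>" using reg unfolding regen_code_def by auto
  have hW: "\<And>i. i \<in> {1..n} \<Longrightarrow> ent p (W i) = ennreal \<alpha>" using reg unfolding regen_code_def by auto
  have hS: "\<And>i j. i \<in> {1..n} \<Longrightarrow> j \<in> {1..n} \<Longrightarrow> i \<noteq> j \<Longrightarrow> ent p (S i j) = ennreal \<beta> \<and> cond_ent p (S i j) (W i) = 0"
    using reg unfolding regen_code_def by auto
  have hrep: "\<And>j I. j \<in> {1..n} \<Longrightarrow> I \<subseteq> {1..n} - {j} \<Longrightarrow> d \<le> card I \<Longrightarrow> cond_ent p (W j) (Sset S I {j}) = 0"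
    using reg unfolding regen_code_def by blast
  have fR: "finite R" and fM: "finite M'" using assms(6,7) finite_subset by auto
  have jR: "j \<in> R" using j assms(5) by auto
  have jM: "j \<notin> M'" using jR assms(8) by auto
  have jn: "j \<in> {1..n}" using jR assms(6) by auto
  define r where "r = card R"
  define m where "m = card M'"
  have "card R > 0" using fR jR card_gt_0_iff by blast
  then have r1: "1 \<le> r" unfolding r_def by simp
  have rm: "r + m \<le> d" using assms(2,9) unfolding r_def m_def by simp
  have nd: "d + 1 \<le> n" using assms(1-3) by simp
  have cU: "card (R \<union> M') = r + m" unfolding r_def m_def using fR fM assms(8) by (simp add: card_Un_disjoint)
  have "card ({1..n} - (R \<union> M')) = n - (r + m)"
    using cU assms(6,7) fR fM by (subst card_Diff_subset) auto
  then have "d + 1 - r - m \<le> card ({1..n} - (R \<union> M'))" using nd rm by simp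
  then obtain D where D: "D \<subseteq> {1..n} - (R \<union> M')" "card D = d + 1 - r - m" "finite D"
    by (rule obtain_subset_with_card_n)
  have jD: "j \<notin> D" using D jR by auto
  define I where "I = (R - {j}) \<union> M' \<union> D"
  have cI: "card I = d"
  proof -
    have "card I = card (R - {j}) + card M' + card D"
      unfolding I_def using fR fM D assms(8)
      by (subst card_Un_disjoint, auto, subst card_Un_disjoint, auto)
    also have "card (R - {j}) = r - 1" unfolding r_def using jR fR by simp
    finally show ?thesis using D(2) r1 rm unfolding m_def by simp
  qed
  have Isub: "I \<subseteq> {1..n} - {j}" unfolding I_def using assms(6,7) D jM jD by auto
  have detWj: "det p (W j) (Sset S I {j})" by (rule det_cond0, rule hrep[OF jn Isub]) (simp add: cI)
  have detS: "det p (S i j) (W i)" if "i \<in> R - {j}" for i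
  proof (rule det_cond0)
    have "i \<in> {1..n}" "i \<noteq> j" using that assms(6) by auto
    then show "cond_ent p (S i j) (W i) = 0" using hS jn by blast
  qed
  define U where "U = (\<lambda>\<omega>. (Wset W (R - {j}) \<omega>, Sset S M' {j} \<omega>, Sset S D {j} \<omega>))"
  have det: "det p (\<lambda>\<omega>. (Wset W R \<omega>, Sset S M' {j} \<omega>)) U"
    unfolding det_def
  proof (intro ballI impI)
    fix \<omega> \<omega>' assume w: "\<omega> \<in> set_pmf p" "\<omega>' \<in> set_pmf p" and e: "U \<omega> = U \<omega>'"
    have h1: "\<forall>i\<in>R - {j}. W i \<omega> = W i \<omega>'" and h2: "Sset S M' {j} \<omega> = Sset S M' {j} \<omega>'"
      and h3: "\<forall>i\<in>D. i \<noteq> j \<longrightarrow> S i j \<omega> = S i j \<omega>'"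
      using e unfolding U_def prod.inject Wset_eq Sset_eq by auto
    have h2': "\<forall>i\<in>M'. i \<noteq> j \<longrightarrow> S i j \<omega> = S i j \<omega>'" using h2 unfolding Sset_eq by auto
    have "\<forall>i\<in>I. i \<noteq> j \<longrightarrow> S i j \<omega> = S i j \<omega>'"
    proof (intro ballI impI)
      fix i assume i: "i \<in> I" "i \<noteq> j"
      show "S i j \<omega> = S i j \<omega>'"
      proof (cases "i \<in> R - {j}")
        case True
        then show ?thesis using detS[OF True] h1 w unfolding det_def by blast
      next
        case False
        then show ?thesis using i h2' h3 unfolding I_def by auto
      qed
    qed
    then have "Sset S I {j} \<omega> = Sset S I {j} \<omega>'" unfolding Sset_eq by auto
    then have "W j \<omega> = W j \<omega>'" using detWj w unfolding det_def by blast
    then have "\<forall>i\<in>R. W i \<omega> = W i \<omega>'" using h1 by auto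
    then show "(Wset W R \<omega>, Sset S M' {j} \<omega>) = (Wset W R \<omega>', Sset S M' {j} \<omega>')"
      using h2 unfolding prod.inject Wset_eq by auto
  qed
  have "ent p (\<lambda>\<omega>. (Wset W R \<omega>, Sset S M' {j} \<omega>)) \<le> ent p U" by (rule ent_det[OF det])
  also have "\<dots> \<le> ent p (Wset W (R - {j})) + (ent p (Sset S M' {j}) + ent p (Sset S D {j}))"
    unfolding U_def by (rule order_trans[OF subadd add_left_mono[OF subadd]])
  also have "\<dots> \<le> ennreal (real (card (R - {j})) * \<alpha>) + (ennreal (real (card M') * \<beta>) + ennreal (real (card D) * \<beta>))"
  proof (intro add_mono)
    show "ent p (Wset W (R - {j})) \<le> ennreal (real (card (R - {j})) * \<alpha>)"
      using fR ab assms(6) hW by (intro ent_Wset_le) auto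
    show "ent p (Sset S M' {j}) \<le> ennreal (real (card M') * \<beta>)"
    proof (rule ent_Sset_le[OF fM jM ab(2)])
      show "\<forall>i\<in>M'. ent p (S i j) \<le> ennreal \<beta>"
      proof
        fix i assume "i \<in> M'"
        then have "i \<in> {1..n}" "i \<noteq> j" using assms(7) jM by auto
        then show "ent p (S i j) \<le> ennreal \<beta>" using hS[OF _ jn] by simp
      qed
    qed
    show "ent p (Sset S D {j}) \<le> ennreal (real (card D) * \<beta>)"
    proof (rule ent_Sset_le[OF D(3) jD ab(2)])
      show "\<forall>i\<in>D. ent p (S i j) \<le> ennreal \<beta>"
      proof
        fix i assume "i \<in> D"
        then have "i \<in> {1..n}" "i \<noteq> j" using D(1) jD by auto
        then show "ent p (S i j) \<le> ennreal \<beta>" using hS[OF _ jn] by simp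
      qed
    qed
  qed
  also have "\<dots> = ennreal (real (card (R - {j})) * \<alpha> + (real (card M') * \<beta> + real (card D) * \<beta>))"
    using ab by (simp add: ennreal_plus)
  also have "real (card (R - {j})) * \<alpha> + (real (card M') * \<beta> + real (card D) * \<beta>)
      = (real (card R) - 1) * \<alpha> + (real d - real (card R) + 1) * \<beta>"
  proof -
    have "card (R - {j}) = r - 1" unfolding r_def using jR fR by simp
    then have a: "real (card (R - {j})) = real r - 1" using r1 by simp
    have b: "real (card D) = real d + 1 - real r - real m" using D(2) rm by simp
    show ?thesis unfolding a b r_def[symmetric] m_def[symmetric] by (simp add: algebra_simps)
  qed
  finally show ?thesis .
qed

theorem mainTheorem4:
  fixes n k d :: nat and B \<alpha> \<beta> :: real and p :: "'o pmf" and M :: "'o \<Rightarrow> 'm"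
    and W :: "nat \<Rightarrow> 'o \<Rightarrow> 'w" and S :: "nat \<Rightarrow> nat \<Rightarrow> 'o \<Rightarrow> 's"
    and L R M' :: "nat set"
  assumes "1 \<le> k" "k \<le> d" "d \<le> n - 1"
    and "regen_code n k d B \<alpha> \<beta> p M W S"
    and "L \<subseteq> R" "R \<subseteq> {1..n}" "M' \<subseteq> {1..n}" "R \<inter> M' = {}"
    and "card L \<ge> 1" "card R + card M' \<le> k"
  shows "cond_ent p (Wset W R) (Wset W M') + of_nat (card L - 1) * ent p (Wset W R)
           + ent p (Sset S M' L)
         \<le> ennreal (real (card L) * (real (card R) * \<alpha> + \<beta>)
                    + real (card L) * ((real d - real (card R)) * \<beta> - \<alpha>))"
proof -
  have hS: "\<And>i j. i \<in> {1..n} \<Longrightarrow> j \<in> {1..n} \<Longrightarrow> i \<noteq> j \<Longrightarrow> cond_ent p (S i j) (W i) = 0"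
    using assms(4) unfolding regen_code_def by blast
  have fL: "finite L" "L \<noteq> {}" using assms(9) card_gt_0_iff by force+
  define WR where "WR = Wset W R"
  define K where "K = (real (card R) - 1) * \<alpha> + (real d - real (card R) + 1) * \<beta>"
  have detX: "det p (Sset S M' L) (Wset W M')"
    unfolding det_def
  proof (intro ballI impI)
    fix \<omega> \<omega>' assume w: "\<omega> \<in> set_pmf p" "\<omega>' \<in> set_pmf p" and e: "Wset W M' \<omega> = Wset W M' \<omega>'"
    show "Sset S M' L \<omega> = Sset S M' L \<omega>'" unfolding Sset_eq
    proof (intro ballI impI)
      fix i j assume ij: "i \<in> M'" "j \<in> L" "i \<noteq> j"
      have "i \<in> {1..n}" "j \<in> {1..n}" using ij assms(5-7) by auto
      then have "det p (S i j) (W i)" using hS ij(3) det_cond0 by blast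
      moreover have "W i \<omega> = W i \<omega>'" using e ij(1) unfolding Wset_eq by auto
      ultimately show "S i j \<omega> = S i j \<omega>'" using w unfolding det_def by blast
    qed
  qed
  have "cond_ent p (Wset W R) (Wset W M') + of_nat (card L - 1) * ent p (Wset W R) + ent p (Sset S M' L)
      \<le> cond_ent p WR (Sset S M' L) + of_nat (card L - 1) * ent p WR + ent p (Sset S M' L)"
    unfolding WR_def by (intro add_mono order_refl cond_mono_det detX)
  also have "\<dots> = ent p (\<lambda>\<omega>. (WR \<omega>, Sset S M' L \<omega>)) + of_nat (card L - 1) * ent p WR"
    unfolding chain[of p WR] by (simp add: ac_simps)
  also have "\<dots> \<le> (\<Sum>j\<in>L. ent p (\<lambda>\<omega>. (WR \<omega>, Sset S M' {j} \<omega>)))"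
    by (rule step_c[OF fL])
  also have "\<dots> \<le> (\<Sum>j\<in>L. ennreal K)"
    unfolding WR_def K_def
    by (intro sum_mono step_d[OF assms(1-8) assms(10)])
  also have "\<dots> = ennreal (real (card L) * K)"
    by (simp add: ennreal_of_nat_eq_real_of_nat ennreal_mult')
  also have "real (card L) * K = real (card L) * (real (card R) * \<alpha> + \<beta>)
                    + real (card L) * ((real d - real (card R)) * \<beta> - \<alpha>)"
    unfolding K_def by (simp add: algebra_simps)
  finally show ?thesis .
qed


end
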